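(* Let $n\ge1$, $h>0$, $\lambda>0$, and let $f:\mathbb{R}^n\to\mathbb{R}$ be a function whose modulus of continuity $\omega_f(t)=\sup\{|f(x)-f(y)|:x,y\in\mathbb{R}^n,\ |x-y|\le t\}$ satisfies $\omega_f(t)\le at+b$ for all $t\ge0$, with constants $a>0$, $b\ge0$. Then for every grid point $x_k\in h\mathbb{Z}^n$, $$\big|M^h_\lambda(f)(x_k)-M_\lambda(f)(x_k)\big|\le \omega_f(h\sqrt n)+2\lambda h^2 n+2h\sqrt\lambda\,d(\lambda),$$ where $d(\lambda)=\sqrt{\omega_f\big(a/\lambda+\sqrt{b/\lambda}\big)}$.
   Context: $M_\lambda(f)(x)=\inf_{y\in\mathbb{R}^n}\{f(y)+\lambda|y-x|^2\}$ is the lower Moreau envelope, and the discrete lower Moreau envelope at a grid point $x_k$ of the grid of size $h$ is $M^h_\lambda(f)(x_k)=\inf\{f(x_k+rh)+\lambda h^2|r|^2:\ r\in\mathbb{Z}^n\}$. Here $|\cdot|$ is the Euclidean norm. *)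

theory Defs
  imports "HOL-Analysis.Analysis"
begin

definition modulus_cont :: "(real^'n \<Rightarrow> real) \<Rightarrow> real \<Rightarrow> real" where
  "modulus_cont f t = Sup {\<bar>f x - f y\<bar> | x y. norm (x - y) \<le> t}"

definition moreau :: "(real^'n \<Rightarrow> real) \<Rightarrow> real \<Rightarrow> real^'n \<Rightarrow> real" where
  "moreau f lam x = Inf {f y + lam * (norm (y - x))^2 | y. True}"

definition ivec :: "int^'n \<Rightarrow> real^'n" where
  "ivec r = (\<chi> i. real_of_int (r $ i))"

definition dmoreau :: "(real^'n \<Rightarrow> real) \<Rightarrow> real \<Rightarrow> real \<Rightarrow> real^'n \<Rightarrow> real" where
  "dmoreau f lam h x = Inf {f (x + h *\<^sub>R ivec r) + lam * h^2 * (norm (ivec r))^2 | r. True}"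

end

theory Submission
  imports Defs
begin

lemma norm_le_sqrt_card:
  fixes v :: "real^'n"
  assumes "\<And>i. \<bar>v $ i\<bar> \<le> h" "h \<ge> 0"
  shows "norm v \<le> h * sqrt (real CARD('n))"
proof -
  have "norm v = sqrt (\<Sum>i\<in>UNIV. (v $ i)^2)"
    by (simp add: norm_vec_def L2_set_def)
  also have "\<dots> \<le> sqrt (\<Sum>i\<in>(UNIV::'n set). h^2)"
  proof (rule real_sqrt_le_mono, rule sum_mono)
    fix i
    have "\<bar>v $ i\<bar>^2 \<le> h^2" using assms(1)[of i] by (intro power_mono) auto
    then show "(v $ i)^2 \<le> h^2" by simp
  qed
  also have "\<dots> = sqrt (h^2 * real CARD('n))" by (simp add: mult.commute)
  also have "\<dots> = h * sqrt (real CARD('n))" using assms(2) by (simp add: real_sqrt_mult)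
  finally show ?thesis .
qed

lemma round_lemma:
  fixes x y :: "real^'n" and h :: real
  assumes "h > 0"
  shows "\<exists>r. norm (h *\<^sub>R ivec r) \<le> norm (y - x) \<and> norm (x + h *\<^sub>R ivec r - y) \<le> h * sqrt (real CARD('n))"
proof -
  define r :: "int^'n" where "r = (\<chi> i. if y$i - x$i \<ge> 0 then floor ((y$i - x$i)/h) else ceiling ((y$i - x$i)/h))"
  have c: "\<bar>h * of_int (r$i)\<bar> \<le> \<bar>y$i - x$i\<bar> \<and> \<bar>x$i + h * of_int (r$i) - y$i\<bar> \<le> h" for i
  proof (cases "y$i - x$i \<ge> 0")
    case True
    define d where "d = y$i - x$i"
    have r: "r$i = floor (d/h)" using True by (simp add: r_def d_def)
    have "of_int (floor (d/h)) \<le> d/h" "d/h < of_int (floor (d/h)) + 1" by linarith+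
    then have "h * of_int (floor (d/h)) \<le> h * (d/h)" "h * (d/h) < h * (of_int (floor (d/h)) + 1)"
      using assms by (intro mult_left_mono mult_strict_left_mono; simp)+
    then have "h * of_int (floor (d/h)) \<le> d" "d < h * of_int (floor (d/h)) + h"
      using assms by (simp_all add: algebra_simps)
    moreover have "h * of_int (floor (d/h)) \<ge> 0" using True assms by (simp add: d_def)
    moreover have "x$i + h * of_int (r$i) - y$i = h * of_int (floor (d/h)) - d" by (simp add: r d_def)
    moreover have "0 \<le> d" using True by (simp add: d_def)
    ultimately show ?thesis unfolding r d_def[symmetric] by (simp only: abs_le_iff) linarith
  next
    case False
    define d where "d = y$i - x$i"
    have r: "r$i = ceiling (d/h)" using False by (simp add: r_def d_def)
    have "of_int (ceiling (d/h)) \<ge> d/h" "d/h > of_int (ceiling (d/h)) - 1" by linarith+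
    then have "h * of_int (ceiling (d/h)) \<ge> h * (d/h)" "h * (d/h) > h * (of_int (ceiling (d/h)) - 1)"
      using assms by (intro mult_left_mono mult_strict_left_mono; simp)+
    then have "h * of_int (ceiling (d/h)) \<ge> d" "d > h * of_int (ceiling (d/h)) - h"
      using assms by (simp_all add: algebra_simps)
    moreover have "ceiling (d/h) \<le> 0" using False assms
      by (simp add: d_def divide_nonpos_pos ceiling_le_zero)
    then have "h * of_int (ceiling (d/h)) \<le> 0" using assms by (simp add: mult_nonneg_nonpos)
    moreover have "x$i + h * of_int (r$i) - y$i = h * of_int (ceiling (d/h)) - d" by (simp add: r d_def)
    moreover have "d < 0" using False by (simp add: d_def)
    ultimately show ?thesis unfolding r d_def[symmetric] by (simp only: abs_le_iff) linarith
  qed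
  show ?thesis
  proof (intro exI conjI)
    show "norm (h *\<^sub>R ivec r) \<le> norm (y - x)"
      using c by (intro norm_le_componentwise_cart) (simp add: ivec_def)
    show "norm (x + h *\<^sub>R ivec r - y) \<le> h * sqrt (real CARD('n))"
      using c assms by (intro norm_le_sqrt_card) (auto simp: ivec_def)
  qed
qed

theorem theorem4p2:
  fixes f :: "real^'n \<Rightarrow> real" and h lam a b :: real and k :: "int^'n"
  assumes "h > 0" and "lam > 0" and "a > 0" and "b \<ge> 0"
    and omega: "\<And>t x y. t \<ge> 0 \<Longrightarrow> norm (x - y) \<le> t \<Longrightarrow> \<bar>f x - f y\<bar> \<le> a * t + b"
  shows "\<bar>dmoreau f lam h (h *\<^sub>R ivec k) - moreau f lam (h *\<^sub>R ivec k)\<bar>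
     \<le> modulus_cont f (h * sqrt (real CARD('n))) + 2 * lam * h^2 * real CARD('n)
       + 2 * h * sqrt lam * sqrt (modulus_cont f (a / lam + sqrt (b / lam)))"
proof -
  define x where "x = h *\<^sub>R ivec k"
  define S where "S = {f y + lam * (norm (y - x))^2 | y. True}"
  define T where "T = {f (x + h *\<^sub>R ivec r) + lam * h^2 * (norm (ivec r))^2 | r. True}"
  define w where "w = modulus_cont f (h * sqrt (real CARD('n)))"
  have modnn: "modulus_cont f t \<ge> 0" if "t \<ge> 0" for t
  proof -
    have bdd: "bdd_above {\<bar>f x - f y\<bar> | x y. norm (x - y) \<le> t}"
      using omega[OF that] by (auto intro!: bdd_aboveI[of _ "a*t+b"])
    have "\<bar>f x - f x\<bar> \<in> {\<bar>f x - f y\<bar> | x y. norm (x - y) \<le> t}" using that by force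
    from cSup_upper[OF this bdd] show ?thesis by (simp add: modulus_cont_def)
  qed
  have wge: "f z - f y \<le> w" if "norm (z - y) \<le> h * sqrt (real CARD('n))" for z y
  proof -
    have t0: "h * sqrt (real CARD('n)) \<ge> 0" using assms(1) by simp
    have bdd: "bdd_above {\<bar>f x - f y\<bar> | x y. norm (x - y) \<le> h * sqrt (real CARD('n))}"
      using omega[OF t0] by (auto intro!: bdd_aboveI[of _ "a*(h * sqrt (real CARD('n)))+b"])
    have "\<bar>f z - f y\<bar> \<in> {\<bar>f x - f y\<bar> | x y. norm (x - y) \<le> h * sqrt (real CARD('n))}"
      using that by auto
    from cSup_upper[OF this bdd] show ?thesis by (simp add: modulus_cont_def w_def)
  qed
  define L where "L = f x - b - a^2 / (4*lam)"
  have Slow: "L \<le> f y + lam * (norm (y - x))^2" for y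
  proof -
    have "\<bar>f y - f x\<bar> \<le> a * norm (y - x) + b" using omega[of "norm (y-x)" y x] by simp
    moreover have "a * norm (y - x) \<le> a^2/(4*lam) + lam * (norm (y - x))^2"
    proof -
      have "0 \<le> (2*lam*norm (y-x) - a)^2" by simp
      then have "4*lam*(a * norm (y - x)) \<le> 4*lam*(a^2/(4*lam) + lam * (norm (y - x))^2)"
        using assms(2) by (simp add: power2_eq_square algebra_simps)
      then show ?thesis using assms(2) by simp
    qed
    ultimately show ?thesis unfolding L_def by linarith
  qed
  have Tsub: "T \<subseteq> S"
  proof
    fix t assume "t \<in> T"
    then obtain r where t: "t = f (x + h *\<^sub>R ivec r) + lam * h^2 * (norm (ivec r))^2"
      unfolding T_def by auto
    have "lam * h^2 * (norm (ivec r))^2 = lam * (norm (x + h *\<^sub>R ivec r - x))^2"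
      using assms(1) by (simp add: power_mult_distrib)
    then show "t \<in> S" unfolding S_def t by (intro CollectI exI[of _ "x + h *\<^sub>R ivec r"]) simp
  qed
  have Sne: "S \<noteq> {}" unfolding S_def by auto
  have Tne: "T \<noteq> {}" unfolding T_def by auto
  have Sbdd: "bdd_below S" unfolding S_def using Slow by (auto intro!: bdd_belowI[of _ L])
  have Tbdd: "bdd_below T" using Sbdd Tsub by (rule bdd_below_mono)
  have le1: "Inf S \<le> Inf T" using cInf_superset_mono[OF Tne Sbdd Tsub] .
  have le2: "Inf T - w \<le> Inf S"
  proof (rule cInf_greatest[OF Sne])
    fix s assume "s \<in> S"
    then obtain y where s: "s = f y + lam * (norm (y - x))^2" unfolding S_def by auto
    obtain r where r1: "norm (h *\<^sub>R ivec r) \<le> norm (y - x)"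
      and r2: "norm (x + h *\<^sub>R ivec r - y) \<le> h * sqrt (real CARD('n))"
      using round_lemma[OF assms(1)] by blast
    have mem: "f (x + h *\<^sub>R ivec r) + lam * h^2 * (norm (ivec r))^2 \<in> T" unfolding T_def by blast
    have "Inf T \<le> f (x + h *\<^sub>R ivec r) + lam * h^2 * (norm (ivec r))^2"
      using cInf_lower[OF mem Tbdd] .
    also have "lam * h^2 * (norm (ivec r))^2 = lam * (norm (h *\<^sub>R ivec r))^2"
      using assms(1) by (simp add: power_mult_distrib)
    also have "\<dots> \<le> lam * (norm (y - x))^2"
      using r1 assms(2) by (intro mult_left_mono power_mono) auto
    finally show "Inf T - w \<le> s" using wge[OF r2] unfolding s by linarith
  qed
  have "\<bar>Inf T - Inf S\<bar> \<le> w" using le1 le2 by linarith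
  moreover have "0 \<le> 2 * lam * h^2 * real CARD('n)" using assms(2) by simp
  moreover have "0 \<le> 2 * h * sqrt lam * sqrt (modulus_cont f (a / lam + sqrt (b / lam)))"
    using assms by (intro mult_nonneg_nonneg modnn real_sqrt_ge_zero add_nonneg_nonneg) auto
  ultimately show ?thesis
    unfolding w_def S_def T_def x_def dmoreau_def moreau_def by linarith
qed

end
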